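(* Let $a$ and $b$ be relatively prime integers with $1<a<b$, let $(u,v)$ be the definitely least solution of $ax+by=1$, let $S=\langle a,b\rangle$ and $h=\min I(S)$. Let $L(S)$ be the $|v|\times|u|$ matrix with $(i,j)$-entry $L(S)(i,j)=h+(i-1)b+(j-1)a$. Then for all $1\le i\le |v|$ and $1\le j\le |u|$, $L(S)(i,j)=F(S)-(|u|-j)a-(|v|-i)b$.
   Context: $\langle a,b\rangle=\{\lambda_1a+\lambda_2b:\lambda_1,\lambda_2\in\mathbb{N}\}$. $F(S)$ is the Frobenius number of $S$, the largest integer not in $S$. $I(S)$ is the set of isolated gaps of $S$ ($x\in\mathbb{N}\setminus S$ with $x-1,x+1\in S$). The definitely least solution $(u,v)$ of $ax+by=1$ is the unique integer solution with $|u|,|v|$ minimal; equivalently the one with $|u|\le b/2$, $|v|\le a/2$. *)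

theory Defs
  imports Main
begin

definition gen2 :: "int \<Rightarrow> int \<Rightarrow> int set" where
  "gen2 a b = {int l1 * a + int l2 * b | l1 l2. True}"

definition frobenius :: "int set \<Rightarrow> int" where
  "frobenius S = Max {x. 0 \<le> x \<and> x \<notin> S}"

definition isolated_gaps :: "int set \<Rightarrow> int set" where
  "isolated_gaps S = {x. 0 \<le> x \<and> x \<notin> S \<and> x - 1 \<in> S \<and> x + 1 \<in> S}"

definition def_least_sol :: "int \<Rightarrow> int \<Rightarrow> int \<Rightarrow> int \<Rightarrow> bool" where
  "def_least_sol a b u v \<longleftrightarrow> a * u + b * v = 1 \<and> 2 * \<bar>u\<bar> \<le> b \<and> 2 * \<bar>v\<bar> \<le> a"

definition Lmat :: "int \<Rightarrow> int \<Rightarrow> int \<Rightarrow> int \<Rightarrow> int" where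
  "Lmat a b i j = Min (isolated_gaps (gen2 a b)) + (i - 1) * b + (j - 1) * a"

end

theory Submission
  imports Defs
begin

lemma gap_form_notin:
  fixes a b m n :: int
  assumes "coprime a b" "1 < a" "1 < b" "1 \<le> m" "1 \<le> n"
  shows "a*b - m*a - n*b \<notin> gen2 a b"
proof
  assume "a*b - m*a - n*b \<in> gen2 a b"
  then obtain k l :: nat where e: "a*b - m*a - n*b = int k * a + int l * b"
    unfolding gen2_def by blast
  have e2: "(int k + m) * a + (int l + n) * b = a * b" using e by (simp add: algebra_simps)
  have "a dvd (int l + n) * b" using e2
    by (metis dvd_triv_left dvd_triv_right dvd_diff add_diff_cancel_left')
  then have "a dvd (int l + n)" using assms(1) by (simp add: coprime_dvd_mult_left_iff)
  then have A: "a \<le> int l + n" using assms by (intro zdvd_imp_le) auto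
  have "b dvd (int k + m) * a" using e2
    by (metis dvd_triv_left dvd_triv_right dvd_diff add_diff_cancel_right')
  then have "b dvd (int k + m)" using assms(1) by (simp add: coprime_dvd_mult_left_iff coprime_commute)
  then have B: "b \<le> int k + m" using assms by (intro zdvd_imp_le) auto
  have "b * a \<le> (int k + m) * a" using B assms by (intro mult_right_mono) auto
  moreover have "a * b \<le> (int l + n) * b" using A assms by (intro mult_right_mono) auto
  ultimately show False using e2 assms by (smt (verit) mult.commute mult_pos_pos)
qed

lemma gap_rep:
  fixes a b u v x :: int
  assumes "a*u + b*v = 1" "1 < a" "1 < b" "0 \<le> x" "x \<notin> gen2 a b"
  shows "\<exists>m n. 1 \<le> m \<and> 1 \<le> n \<and> x = a*b - m*a - n*b"
proof -
  define k where "k = (x*u) mod b"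
  have k0: "0 \<le> k" "k < b" using assms unfolding k_def by auto
  have "b dvd x - k*a"
  proof -
    have km: "k = x*u - (x*u) div b * b" unfolding k_def by (simp add: minus_div_mult_eq_mod[symmetric])
    have "x - k*a = x*(1 - a*u) + ((x*u) div b)*b*a" by (simp add: km algebra_simps)
    also have "1 - a*u = b*v" using assms(1) by simp
    finally have "x - k*a = b*(x*v + (x*u) div b * a)" by (simp add: algebra_simps)
    then show ?thesis by simp
  qed
  then obtain l where l: "x - k*a = b*l" by (auto elim: dvdE)
  have "l < 0"
  proof (rule ccontr)
    assume "\<not> l < 0"
    then have "x = int (nat k) * a + int (nat l) * b" using l k0 by (simp add: algebra_simps)
    then have "x \<in> gen2 a b" unfolding gen2_def by blast
    then show False using assms by simp
  qed
  show ?thesis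
    by (rule exI[of _ "b-k"], rule exI[of _ "-l"]) (use k0 l \<open>l<0\<close> in \<open>auto simp: algebra_simps\<close>)
qed

theorem corollary4p12:
  fixes a b u v :: int
  assumes "coprime a b" and "1 < a" and "a < b"
    and "def_least_sol a b u v"
  shows "\<forall>i j. 1 \<le> i \<and> i \<le> \<bar>v\<bar> \<and> 1 \<le> j \<and> j \<le> \<bar>u\<bar> \<longrightarrow>
           Lmat a b i j = frobenius (gen2 a b) - (\<bar>u\<bar> - j) * a - (\<bar>v\<bar> - i) * b"
proof -
  define p where "p = \<bar>u\<bar>"
  define q where "q = \<bar>v\<bar>"
  define S where "S = gen2 a b"
  have bz: "a*u + b*v = 1" and pb: "2*p \<le> b" and qa: "2*q \<le> a"
    using assms(4) unfolding def_least_sol_def p_def q_def by auto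
  have b1: "1 < b" using assms by simp
  have sgn: "(q*b - p*a = 1 \<and> 1 \<le> p \<and> 1 \<le> q) \<or> (p*a - q*b = 1 \<and> 1 \<le> p \<and> 1 \<le> q)"
  proof (cases "u < 0")
    case True
    have "v > 0"
    proof (rule ccontr)
      assume "\<not> v > 0"
      then have "a*u < 0" "b*v \<le> 0" using True assms by (auto simp: mult_pos_neg mult_nonneg_nonpos)
      then show False using bz by simp
    qed
    then show ?thesis using True bz unfolding p_def q_def by (auto simp: algebra_simps)
  next
    case False
    have "u \<noteq> 0"
    proof
      assume "u = 0"
      then have "b*v = 1" using bz by simp
      then show False using b1 using pos_zmult_eq_1_iff[of b v] by simp
    qed
    then have u0: "u > 0" using False by simp
    have "v < 0"
    proof (rule ccontr)
      assume "\<not> v < 0"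
      then have "a*u \<ge> a*1" "b*v \<ge> 0" using u0 assms by (auto intro: mult_left_mono)
      then show False using bz assms by linarith
    qed
    then show ?thesis using u0 bz unfolding p_def q_def by (auto simp: algebra_simps)
  qed
  have p1: "1 \<le> p" and q1: "1 \<le> q" using sgn by auto
  have inS: "int k * a + int l * b \<in> S" for k l :: nat unfolding S_def gen2_def by blast
  have inS': "0 \<le> k \<Longrightarrow> 0 \<le> l \<Longrightarrow> k * a + l * b \<in> S" for k l :: int
    using inS[of "nat k" "nat l"] by simp
  define h where "h = a*b - p*a - q*b"
  have h0: "0 \<le> h"
  proof -
    have "2*p*a \<le> b*a" using pb assms by (intro mult_right_mono) auto
    moreover have "2*q*b \<le> a*b" using qa b1 by (intro mult_right_mono) auto
    ultimately show ?thesis unfolding h_def by (simp add: algebra_simps)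
  qed
  have hnot: "h \<notin> S" unfolding h_def S_def
    using gap_form_notin[OF assms(1) assms(2) b1 p1 q1] .
  have hp: "h + 1 \<in> S" and hm: "h - 1 \<in> S"
  proof -
    have "(h+1 = (b - 2*p)*a + 0*b \<and> h - 1 = 0*a + (a-2*q)*b) \<or>
          (h+1 = 0*a + (a-2*q)*b \<and> h - 1 = (b - 2*p)*a + 0*b)"
      using sgn unfolding h_def by (auto simp: algebra_simps)
    then show "h + 1 \<in> S" "h - 1 \<in> S" using inS'[of "b-2*p" 0] inS'[of 0 "a-2*q"] pb qa by auto
  qed
  have hI: "h \<in> isolated_gaps S" unfolding isolated_gaps_def using h0 hnot hp hm by auto
  have gaps_bound: "x \<le> a*b - a - b" if tx: "0 \<le> x" "x \<notin> S" for x
  proof -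
    obtain m n where "1 \<le> m" "1 \<le> n" "x = a*b - m*a - n*b"
      using gap_rep[OF bz assms(2) b1 tx(1)] tx(2) unfolding S_def by blast
    moreover have "m*a \<ge> 1*a" "n*b \<ge> 1*b" using calculation assms b1
      by (intro mult_right_mono; simp)+
    ultimately show ?thesis by simp
  qed
  have fin: "finite {x. 0 \<le> x \<and> x \<notin> S}"
    by (rule finite_subset[of _ "{0..a*b - a - b}"]) (auto dest: gaps_bound)
  have Fg: "a*b - a - b \<in> {x. 0 \<le> x \<and> x \<notin> S}"
  proof -
    have "(a-1)*(b-1) \<ge> 1*1" using assms b1 by (intro mult_mono) auto
    then have "0 \<le> a*b - a - b" by (simp add: algebra_simps)
    moreover have "a*b - 1*a - 1*b \<notin> S" unfolding S_def
      using gap_form_notin[OF assms(1) assms(2) b1, of 1 1] by simp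
    ultimately show ?thesis by simp
  qed
  have F: "frobenius S = a*b - a - b"
    unfolding frobenius_def using fin Fg gaps_bound
    by (intro Max_eqI) auto
  have finI: "finite (isolated_gaps S)"
    by (rule finite_subset[OF _ fin]) (auto simp: isolated_gaps_def)
  have hmin: "h \<le> x" if "x \<in> isolated_gaps S" for x
  proof -
    have x0: "0 \<le> x" "x \<notin> S" "x - 1 \<in> S" "x + 1 \<in> S"
      using that unfolding isolated_gaps_def by auto
    obtain m n where mn: "1 \<le> m" "1 \<le> n" "x = a*b - m*a - n*b"
      using gap_rep[OF bz assms(2) b1 x0(1)] x0(2) unfolding S_def by blast
    have G: "\<And>m' n'. 1 \<le> m' \<Longrightarrow> 1 \<le> n' \<Longrightarrow> a*b - m'*a - n'*b \<notin> S"
      unfolding S_def using gap_form_notin[OF assms(1) assms(2) b1] by blast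
    have "m \<le> p \<and> n \<le> q"
      using sgn
    proof
      assume s: "q*b - p*a = 1 \<and> 1 \<le> p \<and> 1 \<le> q"
      have eqs: "x + 1 = a*b - (m+p)*a - (n-q)*b" "x - 1 = a*b - (m-p)*a - (n+q)*b"
        using s mn by (auto simp: algebra_simps)
      have "x + 1 \<notin> S" if "1 \<le> n - q" using G[of "m+p" "n-q"] that p1 mn(1) eqs(1) by simp
      moreover have "x - 1 \<notin> S" if "1 \<le> m - p" using G[of "m-p" "n+q"] that q1 mn(2) eqs(2) by simp
      ultimately show ?thesis using x0 by fastforce
    next
      assume s: "p*a - q*b = 1 \<and> 1 \<le> p \<and> 1 \<le> q"
      have eqs: "x + 1 = a*b - (m-p)*a - (n+q)*b" "x - 1 = a*b - (m+p)*a - (n-q)*b"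
        using s mn by (auto simp: algebra_simps)
      have "x - 1 \<notin> S" if "1 \<le> n - q" using G[of "m+p" "n-q"] that p1 mn(1) eqs(2) by simp
      moreover have "x + 1 \<notin> S" if "1 \<le> m - p" using G[of "m-p" "n+q"] that q1 mn(2) eqs(1) by simp
      ultimately show ?thesis using x0 by fastforce
    qed
    then have "m*a \<le> p*a" "n*b \<le> q*b" using assms b1 by (auto intro: mult_right_mono)
    then show ?thesis using mn unfolding h_def by simp
  qed
  have Mh: "Min (isolated_gaps S) = h"
    using finI hI hmin by (intro Min_eqI) auto
  show ?thesis
    unfolding Lmat_def S_def[symmetric] Mh F p_def[symmetric] q_def[symmetric] h_def
    by (auto simp: algebra_simps)
qed

end
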